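(* There is no Steiner triple system of order $v>3$ whose $2$-rank is less than $v$ and whose $3$-rank is less than $v-1$.
   Context: A Steiner triple system of order $v$ on $\{1,\ldots,v\}$ is a collection of 3-subsets (blocks) such that every 2-subset is contained in exactly one block. For a prime $p$, the $p$-rank of such a system is the dimension of the $\mathrm{GF}(p)$-linear span of the characteristic vectors of its blocks in $\mathrm{GF}(p)^v$. *)

theory Defs
  imports "HOL-Analysis.Analysis"
begin

text \<open>A Steiner triple system on the point set UNIV of a finite type 'n
  (so its order is CARD('n)): a collection of 3-subsets (blocks) such that
  every 2-subset of points is contained in exactly one block.\<close>
definition steiner_triple_system :: "'n::finite set set \<Rightarrow> bool" where
  "steiner_triple_system B \<longleftrightarrow>
     (\<forall>b\<in>B. card b = 3) \<and>
     (\<forall>x y. x \<noteq> y \<longrightarrow> (\<exists>!b. b \<in> B \<and> {x, y} \<subseteq> b))"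

definition char_vec :: "'n::finite set \<Rightarrow> 'f::field ^ 'n" where
  "char_vec b = (\<chi> i. if i \<in> b then 1 else 0)"

text \<open>Rank over the field 'f: dimension of the 'f-linear span of the
  characteristic vectors of the blocks in 'f^n.  For a field 'f with
  CARD('f) = p prime, 'f is GF(p) and this is the p-rank.\<close>
definition rank_over :: "'f::field itself \<Rightarrow> 'n::finite set set \<Rightarrow> nat" where
  "rank_over F B = vec.dim ((char_vec :: 'n set \<Rightarrow> 'f ^ 'n) ` B)"

end

theory Submission
  imports Defs
begin


lemma exists_orth:
  fixes A :: "('f::field^'n) set"
  assumes "vec.dim A < CARD('n)"
  shows "\<exists>x. x \<noteq> 0 \<and> (\<forall>a\<in>A. (\<Sum>i\<in>UNIV. a$i * x$i) = 0)"
proof -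
  have "vec.span A \<noteq> UNIV"
  proof
    assume "vec.span A = UNIV"
    then have "vec.dim A = vec.dim (UNIV :: ('f^'n) set)" by (metis vec.dim_span)
    moreover have "vec.dim (UNIV :: ('f^'n) set) = CARD('n)" by (rule vec_dim_card)
    ultimately show False using assms by simp
  qed
  then obtain e where e: "e \<notin> vec.span A" by auto
  obtain Bs where Bs: "Bs \<subseteq> vec.span A" "vec.independent Bs" "vec.span A \<subseteq> vec.span Bs"
    by (rule vec.maximal_independent_subset[of "vec.span A"])
  have ind: "vec.independent (insert e Bs)"
  proof -
    have "vec.span Bs \<subseteq> vec.span A" by (rule vec.span_minimal[OF Bs(1) vec.subspace_span])
    then have "e \<notin> vec.span Bs" using e by blast
    moreover then have "e \<notin> Bs" using vec.span_superset by blast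
    ultimately show ?thesis using Bs(2) by (simp add: vec.independent_insert)
  qed
  obtain j :: 'n where True by simp
  define L where "L = vec.construct (insert e Bs) (\<lambda>b. if b = e then (axis j 1 :: 'f^'n) else 0)"
  have lin: "Vector_Spaces.linear (*s) (*s) L"
    unfolding L_def using ind by (rule vec.linear_construct)
  have Le: "L e = axis j 1" unfolding L_def by (subst vec.construct_basis[OF ind]) auto
  have LB: "L b = 0" if "b \<in> Bs" for b
  proof -
    have "b \<in> vec.span A" using that Bs(1) by blast
    then have "b \<noteq> e" using e by blast
    then show ?thesis unfolding L_def by (subst vec.construct_basis[OF ind]) (auto simp: that)
  qed
  have L0: "L a = 0" if "a \<in> vec.span Bs" for a
    using vec.linear_eq_0_on_span[OF lin, of Bs a] LB that by blast
  define x where "x = (\<chi> i. L (axis i 1) $ j)"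
  have comp: "(L y) $ j = (\<Sum>i\<in>UNIV. y$i * x$i)" for y
    using linear_componentwise[OF lin, of y j] by (simp add: x_def)
  show ?thesis
  proof (intro exI conjI ballI)
    show "x \<noteq> 0"
    proof
      assume "x = 0"
      then have "(L e) $ j = 0" using comp[of e] by simp
      then show False using Le by simp
    qed
  next
    fix a assume "a \<in> A"
    then have "a \<in> vec.span A" using vec.span_superset[of A] by blast
    then have "a \<in> vec.span Bs" using Bs(3) by blast
    then have "L a = 0" by (rule L0)
    then show "(\<Sum>i\<in>UNIV. a$i * x$i) = 0" using comp[of a] by simp
  qed
qed

lemma third_ex1:
  assumes sts: "steiner_triple_system B" and "p \<noteq> q"
  shows "\<exists>!r. r \<noteq> p \<and> r \<noteq> q \<and> {p, q, r} \<in> B"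
proof -
  obtain b where b: "b \<in> B" "{p,q} \<subseteq> b" and u: "\<And>b'. b' \<in> B \<and> {p,q} \<subseteq> b' \<Longrightarrow> b' = b"
    using sts assms(2) unfolding steiner_triple_system_def by metis
  have "card b = 3" using sts b unfolding steiner_triple_system_def by blast
  then obtain r where r: "b = {p,q,r}" "r \<noteq> p" "r \<noteq> q"
  proof -
    have "card (b - {p,q}) = 1" using \<open>card b = 3\<close> b assms(2)
      by (simp add: card_Diff_subset)
    then obtain r where "b - {p,q} = {r}" by (auto simp: card_Suc_eq)
    then show ?thesis using that b by blast
  qed
  show ?thesis
  proof (rule ex1I[of _ r])
    show "r \<noteq> p \<and> r \<noteq> q \<and> {p, q, r} \<in> B" using r b by simp
  next
    fix r' assume "r' \<noteq> p \<and> r' \<noteq> q \<and> {p, q, r'} \<in> B"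
    then have "{p,q,r'} = b" using u by auto
    then show "r' = r" using r by (auto simp: insert_eq_iff)
  qed
qed

definition third :: "'n::finite set set \<Rightarrow> 'n \<Rightarrow> 'n \<Rightarrow> 'n" where
  "third B p q = (THE r. r \<noteq> p \<and> r \<noteq> q \<and> {p, q, r} \<in> B)"

lemma third:
  assumes sts: "steiner_triple_system B" and "p \<noteq> q"
  shows "third B p q \<noteq> p" "third B p q \<noteq> q" "{p, q, third B p q} \<in> B"
  using theI'[OF third_ex1[OF assms]] unfolding third_def by auto

lemma third_unique:
  assumes sts: "steiner_triple_system B" and "p \<noteq> q" "r \<noteq> p" "r \<noteq> q" "{p,q,r} \<in> B"
  shows "third B p q = r"
  using third_ex1[OF sts \<open>p \<noteq> q\<close>] third[OF sts \<open>p \<noteq> q\<close>] assms(3-5) by blast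

lemma third_invol:
  assumes sts: "steiner_triple_system B" and "p \<noteq> q"
  shows "third B p (third B p q) = q"
proof -
  have "{p, third B p q, q} \<in> B" using third[OF assms] by (simp add: insert_commute)
  then show ?thesis using third[OF assms] assms by (intro third_unique) auto
qed

lemma pair_card:
  assumes sts: "steiner_triple_system B"
    and "p \<notin> Y" "p \<notin> Z" "\<And>y. y \<in> Y \<Longrightarrow> third B p y \<in> Z" "\<And>z. z \<in> Z \<Longrightarrow> third B p z \<in> Y"
  shows "card Y = card Z"
proof -
  have inj: "inj_on (third B p) W" if "p \<notin> W" for W
    using that third_invol[OF sts] by (metis inj_onI)
  have "card Y \<le> card Z" using card_inj_on_le[OF inj[OF assms(2)]] assms(4) by auto
  moreover have "card Z \<le> card Y" using card_inj_on_le[OF inj[OF assms(3)]] assms(5) by auto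
  ultimately show ?thesis by simp
qed

lemma comb:
  fixes B :: "'n::finite set set" and col :: "'n \<Rightarrow> 'c" and ka kb kc :: 'c
  assumes sts: "steiner_triple_system B"
    and cols: "\<And>z. z = ka \<or> z = kb \<or> z = kc"
    and colblk: "\<And>a c d. {a,c,d} \<in> B \<Longrightarrow> a \<noteq> c \<Longrightarrow> a \<noteq> d \<Longrightarrow> c \<noteq> d \<Longrightarrow>
        (col a = col c \<longrightarrow> col d = col a) \<and> (col a \<noteq> col c \<longrightarrow> col d \<noteq> col a \<and> col d \<noteq> col c)"
    and Sblk: "\<And>a c d. {a,c,d} \<in> B \<Longrightarrow> a \<noteq> c \<Longrightarrow> a \<noteq> d \<Longrightarrow> c \<noteq> d \<Longrightarrow>
        (a \<in> S \<and> c \<in> S \<longrightarrow> d \<notin> S) \<and> (a \<in> S \<and> c \<notin> S \<longrightarrow> d \<in> S) \<and> (a \<notin> S \<and> c \<notin> S \<longrightarrow> d \<notin> S)"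
    and pq: "col p \<noteq> col q"
    and Sne: "s0 \<in> S"
  shows "CARD('n) \<le> 3"
proof -
  let ?t = "third B"
  note th = third[OF sts]
  have cb: "(col a = col c \<longrightarrow> col (?t a c) = col a) \<and> (col a \<noteq> col c \<longrightarrow> col (?t a c) \<noteq> col a \<and> col (?t a c) \<noteq> col c)"
    if "a \<noteq> c" for a c using colblk[OF th(3)[OF that]] th[OF that] that by metis
  have sb: "(a \<in> S \<and> c \<in> S \<longrightarrow> ?t a c \<notin> S) \<and> (a \<in> S \<and> c \<notin> S \<longrightarrow> ?t a c \<in> S) \<and> (a \<notin> S \<and> c \<notin> S \<longrightarrow> ?t a c \<notin> S)"
    if "a \<noteq> c" for a c using Sblk[OF th(3)[OF that]] th[OF that] that by metis
  define C where "C k = {i. col i = k}" for k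
  define T where "T = - S"
  have g: "card (S - {s0}) = card T"
  proof (rule pair_card[OF sts, of s0])
    show "s0 \<notin> S - {s0}" by simp
    show "s0 \<notin> T" using Sne T_def by simp
    fix y assume "y \<in> S - {s0}" then show "?t s0 y \<in> T" using sb[of s0 y] Sne T_def by auto
  next
    fix z assume "z \<in> T" then show "?t s0 z \<in> S - {s0}" using sb[of s0 z] Sne T_def th[of s0 z] by auto
  qed
  have loc: "card (S \<inter> C k) = card (T \<inter> C k) + 1" if ne: "S \<inter> C k \<noteq> {}" for k
  proof -
    obtain p where p: "p \<in> S \<inter> C k" using ne by blast
    have "card (S \<inter> C k - {p}) = card (T \<inter> C k)"
    proof (rule pair_card[OF sts, of p])
      show "p \<notin> S \<inter> C k - {p}" by simp
      show "p \<notin> T \<inter> C k" using p T_def by simp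
      fix y assume "y \<in> S \<inter> C k - {p}" then show "?t p y \<in> T \<inter> C k"
        using sb[of p y] cb[of p y] p T_def C_def by auto
    next
      fix z assume "z \<in> T \<inter> C k" then show "?t p z \<in> S \<inter> C k - {p}"
        using sb[of p z] cb[of p z] p T_def C_def th[of p z] by auto
    qed
    moreover have "card (S \<inter> C k) = card (S \<inter> C k - {p}) + 1"
      using p by (simp add: card_Suc_Diff1 del: card_Diff_insert)
    ultimately show ?thesis by simp
  qed
  have cls: "card (C k1) = card (C k2)" if ne: "C k0 \<noteq> {}" "k0 \<noteq> k1" "k0 \<noteq> k2" "k1 \<noteq> k2"
    "\<And>z. z = k0 \<or> z = k1 \<or> z = k2" for k0 k1 k2
  proof -
    obtain p where p: "p \<in> C k0" using ne by blast
    show ?thesis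
    proof (rule pair_card[OF sts, of p])
      show "p \<notin> C k1" "p \<notin> C k2" using p that C_def by auto
      fix y assume y: "y \<in> C k1"
      have "col y = k1" "col p = k0" using y p C_def by auto
      then have "col (?t p y) \<noteq> k0 \<and> col (?t p y) \<noteq> k1" using cb[of p y] that(2) by auto
      then show "?t p y \<in> C k2" using that(5)[of "col (?t p y)"] C_def by auto
    next
      fix y assume y: "y \<in> C k2"
      have "col y = k2" "col p = k0" using y p C_def by auto
      then have "col (?t p y) \<noteq> k0 \<and> col (?t p y) \<noteq> k2" using cb[of p y] that(3) by auto
      then show "?t p y \<in> C k1" using that(5)[of "col (?t p y)"] C_def by auto
    qed
  qed
  have pq': "p \<noteq> q" using pq by auto
  define r where "r = ?t p q"
  have r: "col r \<noteq> col p" "col r \<noteq> col q" using cb[OF pq'] pq r_def by auto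
  have all: "C k \<noteq> {}" for k
  proof -
    have "k = col p \<or> k = col q \<or> k = col r"
    proof (rule ccontr)
      assume n: "\<not> ?thesis"
      show False using cols[of k] cols[of "col p"] cols[of "col q"] cols[of "col r"] pq r n by fastforce
    qed
    then show ?thesis unfolding C_def by auto
  qed
  define a where "a = col p" define b where "b = col q" define c where "c = col r"
  have abc: "a \<noteq> b" "a \<noteq> c" "b \<noteq> c" and cov: "\<And>z. z = a \<or> z = b \<or> z = c"
  proof -
    show "a \<noteq> b" "a \<noteq> c" "b \<noteq> c" using pq r a_def b_def c_def by auto
    fix z :: 'c show "z = a \<or> z = b \<or> z = c"
      using cols[of z] cols[of a] cols[of b] cols[of c] pq r a_def b_def c_def by fastforce
  qed
  have e1: "card (C a) = card (C b)" using cls[of c a b] all abc cov by blast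
  have e2: "card (C a) = card (C c)" using cls[of b a c] all abc cov by blast
  have U: "UNIV = C a \<union> C b \<union> C c" using cov C_def by auto
  have cardU: "CARD('n) = card (C a) + card (C b) + card (C c)"
    unfolding U using abc C_def by (simp add: card_Un_disjoint Int_Un_distrib2 disjoint_iff)
  have split: "card X = card (X \<inter> C a) + card (X \<inter> C b) + card (X \<inter> C c)" for X :: "'n set"
  proof -
    have "X = (X \<inter> C a) \<union> (X \<inter> C b) \<union> (X \<inter> C c)" using U by blast
    then have "card X = card ((X \<inter> C a) \<union> (X \<inter> C b) \<union> (X \<inter> C c))" by simp
    also have "\<dots> = card (X \<inter> C a) + card (X \<inter> C b) + card (X \<inter> C c)"
      using abc C_def by (subst card_Un_disjoint; auto)+
    finally show ?thesis .
  qed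
  have part: "card (S \<inter> C k) + card (T \<inter> C k) = card (C k)" for k
  proof -
    have "C k = (S \<inter> C k) \<union> (T \<inter> C k)" using T_def by blast
    then show ?thesis using T_def by (metis card_Un_disjoint finite disjoint_iff Compl_iff IntD1)
  qed
  have gS: "card S = card T + 1" using g Sne by (metis card_Suc_Diff1 finite Suc_eq_plus1)
  have Sa: "card (S \<inter> C k) = 0 \<or> card (S \<inter> C k) = card (T \<inter> C k) + 1" for k
    using loc[of k] by auto
  show ?thesis
    using split[of S] split[of T] gS Sa[of a] Sa[of b] Sa[of c] part[of a] part[of b] part[of c] e1 e2 cardU
    by linarith
qed


lemma f2prop:
  fixes x y z :: "'a::field"
  assumes two: "1 + 1 = (0::'a)" and v: "\<And>u::'a. u = 0 \<or> u = 1" and s: "x + y + z = 0"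
  shows "(x \<noteq> 0 \<and> y \<noteq> 0 \<longrightarrow> z = 0) \<and> (x \<noteq> 0 \<and> y = 0 \<longrightarrow> z \<noteq> 0) \<and> (x = 0 \<and> y = 0 \<longrightarrow> z = 0)"
proof (intro conjI impI)
  assume "x \<noteq> 0 \<and> y \<noteq> 0"
  then have "x = 1" "y = 1" using v by blast+
  then have "0 + z = 0" using s by (simp only: two)
  then show "z = 0" by (simp only: add_0_left)
next
  assume "x \<noteq> 0 \<and> y = 0"
  then have "x = 1" "y = 0" using v by blast+
  then have "1 + z = 0" using s by (simp only: add_0_right)
  show "z \<noteq> 0"
  proof
    assume "z = 0" then show False using \<open>1 + z = 0\<close> by simp
  qed
next
  assume "x = 0 \<and> y = 0"
  then show "z = 0" using s by simp
qed

lemma f3prop: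
  fixes x y z :: "'a::field"
  assumes three: "1 + 1 + 1 = (0::'a)" and s: "x + y + z = 0"
  shows "(x = y \<longrightarrow> z = x) \<and> (x \<noteq> y \<longrightarrow> z \<noteq> x \<and> z \<noteq> y)"
proof -
  have t: "u + u + u = 0" for u :: 'a
  proof -
    have "u + u + u = (1 + 1 + 1) * u" by (simp add: distrib_right)
    then show ?thesis using three by simp
  qed
  have n2: "- u - u = u" for u :: 'a
  proof -
    have "u + u = - u" using t[of u] by (simp add: eq_neg_iff_add_eq_0)
    then have "- (u + u) = u" by simp
    then show ?thesis by simp
  qed
  have z: "z = - x - y"
  proof -
    have "z + (x + y) = 0" using s by (simp add: ac_simps)
    then have "z = - (x + y)" by (metis eq_neg_iff_add_eq_0)
    then show ?thesis by (metis minus_add_distrib diff_conv_add_uminus)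
  qed
  have y: "y = - x - z"
  proof -
    have "y + (x + z) = 0" using s by (simp add: ac_simps)
    then have "y = - (x + z)" by (metis eq_neg_iff_add_eq_0)
    then show ?thesis by (metis minus_add_distrib diff_conv_add_uminus)
  qed
  have x: "x = - y - z"
  proof -
    have "x + (y + z) = 0" using s by (simp add: ac_simps)
    then have "x = - (y + z)" by (metis eq_neg_iff_add_eq_0)
    then show ?thesis by (metis minus_add_distrib diff_conv_add_uminus)
  qed
  have "x = y \<Longrightarrow> z = x" using z n2[of x] by simp
  moreover have "z = x \<Longrightarrow> x = y" using y n2[of x] by simp
  moreover have "z = y \<Longrightarrow> x = y" using x n2[of y] by simp
  ultimately show ?thesis by blast
qed

lemma gf2:
  assumes "CARD('f::field) = 2"
  shows "\<And>z::'f. z = 0 \<or> z = 1" and "1 + 1 = (0::'f)"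
proof -
  have fin: "finite (UNIV :: 'f set)" by (rule card_ge_0_finite) (simp add: assms)
  have "{0, 1::'f} = UNIV"
    by (rule card_seteq[OF fin]) (auto simp: assms)
  then show z: "\<And>z::'f. z = 0 \<or> z = 1" by auto
  have "1 + 1 \<noteq> (1::'f)" by (metis add_cancel_left_right one_neq_zero)
  then show "1 + 1 = (0::'f)" using z[of "1+1"] by blast
qed

lemma gf3:
  assumes "CARD('f::field) = 3"
  shows "\<And>z::'f. z = 0 \<or> z = 1 \<or> z = 1 + 1" and "1 + 1 + 1 = (0::'f)"
proof -
  have fin: "finite (UNIV :: 'f set)" by (rule card_ge_0_finite) (simp add: assms)
  have "card {0, 1::'f} < card (UNIV :: 'f set)" using assms by simp
  have "\<not> UNIV \<subseteq> {0, 1::'f}"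
  proof
    assume "UNIV \<subseteq> {0, 1::'f}"
    then have "card (UNIV::'f set) \<le> card {0,1::'f}" by (intro card_mono) auto
    then show False using \<open>card {0, 1::'f} < card (UNIV :: 'f set)\<close> by simp
  qed
  then obtain w :: 'f where w: "w \<noteq> 0" "w \<noteq> 1" by blast
  have U: "{0, 1, w} = (UNIV :: 'f set)"
    by (rule card_seteq[OF fin]) (auto simp: assms w)
  then have zz: "z = 0 \<or> z = 1 \<or> z = w" for z :: 'f by auto
  have "1 + 1 \<noteq> (1::'f)" by (metis add_cancel_left_right one_neq_zero)
  have "1 + 1 \<noteq> (0::'f)"
  proof
    assume h: "1 + 1 = (0::'f)"
    then have m: "1 = - (1::'f)" by (simp only: eq_neg_iff_add_eq_0)
    have ww: "w + 1 \<noteq> w" by (metis add_cancel_left_right one_neq_zero)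
    have "w + 1 \<noteq> 1" using w by (metis add_cancel_left_left)
    moreover have "w + 1 \<noteq> 0"
    proof
      assume "w + 1 = 0" then have "w = - 1" by (simp only: eq_neg_iff_add_eq_0)
      then show False using w m by simp
    qed
    ultimately show False using zz[of "w+1"] ww by blast
  qed
  then have w2: "1 + 1 = w" using zz[of "1+1"] \<open>1 + 1 \<noteq> 1\<close> by blast
  then show "\<And>z::'f. z = 0 \<or> z = 1 \<or> z = 1 + 1" using zz by blast
  have "1 + 1 + 1 \<noteq> (1::'f)" using \<open>1 + 1 \<noteq> 0\<close> by (metis add_cancel_left_left)
  moreover have "1 + 1 + 1 \<noteq> w" using w2 by (metis add_cancel_left_right one_neq_zero)
  ultimately show "1 + 1 + 1 = (0::'f)" using zz[of "1+1+1"] by blast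
qed

lemma block_sum:
  fixes x :: "'f::field ^ 'n::finite"
  shows "(\<Sum>i\<in>UNIV. (char_vec b :: 'f^'n) $ i * x $ i) = (\<Sum>i\<in>b. x $ i)"
proof -
  have "(\<Sum>i\<in>UNIV. (char_vec b :: 'f^'n) $ i * x $ i) = (\<Sum>i\<in>UNIV. if i \<in> b then x $ i else 0)"
    unfolding char_vec_def by (rule sum.cong) auto
  also have "\<dots> = (\<Sum>i\<in>UNIV \<inter> b. x $ i)" by (rule sum.inter_restrict[symmetric]) simp
  also have "\<dots> = (\<Sum>i\<in>b. x $ i)" by simp
  finally show ?thesis .
qed

lemma block3:
  fixes x :: "'f::field ^ 'n::finite"
  assumes "\<forall>a\<in>char_vec ` B. (\<Sum>i\<in>UNIV. a$i * x$i) = 0" "{a,c,d} \<in> B" "a \<noteq> c" "a \<noteq> d" "c \<noteq> d"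
  shows "x$a + x$c + x$d = 0"
proof -
  have "(\<Sum>i\<in>UNIV. (char_vec {a,c,d} :: 'f^'n) $ i * x $ i) = 0" using assms(1,2) by blast
  then show ?thesis using assms(3-5) by (simp add: block_sum add.assoc)
qed

theorem proposition3:
  fixes B :: "'n::finite set set"
  assumes "steiner_triple_system B"
    and "CARD('n) > 3"
    and "CARD('f2::field) = 2"
    and "CARD('f3::field) = 3"
  shows "\<not> (rank_over TYPE('f2) B < CARD('n) \<and> rank_over TYPE('f3) B < CARD('n) - 1)"
proof
  assume h: "rank_over TYPE('f2) B < CARD('n) \<and> rank_over TYPE('f3) B < CARD('n) - 1"
  obtain p :: 'n where True by simp
  have d2: "vec.dim ((char_vec :: 'n set \<Rightarrow> 'f2 ^ 'n) ` B) < CARD('n)"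
    using h unfolding rank_over_def by simp
  obtain x2 :: "'f2^'n" where x2: "x2 \<noteq> 0" "\<forall>a\<in>char_vec ` B. (\<Sum>i\<in>UNIV. a$i * x2$i) = 0"
    using exists_orth[OF d2] by blast
  let ?A = "insert (axis p 1) ((char_vec :: 'n set \<Rightarrow> 'f3 ^ 'n) ` B)"
  have "vec.dim ?A \<le> vec.dim ((char_vec :: 'n set \<Rightarrow> 'f3 ^ 'n) ` B) + 1"
    by (simp add: vec.dim_insert)
  then have d3: "vec.dim ?A < CARD('n)" using h assms(2) unfolding rank_over_def by linarith
  obtain x3 :: "'f3^'n" where x3: "x3 \<noteq> 0" "\<forall>a\<in>?A. (\<Sum>i\<in>UNIV. a$i * x3$i) = 0"
    using exists_orth[OF d3] by blast
  have "(\<Sum>i\<in>UNIV. (axis p 1 :: 'f3^'n) $ i * x3$i) = x3 $ p"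
  proof -
    have "(\<Sum>i\<in>UNIV. (axis p 1 :: 'f3^'n) $ i * x3$i) = (\<Sum>i\<in>UNIV. if i = p then x3$i else 0)"
      by (rule sum.cong) (auto simp: axis_def)
    then show ?thesis by simp
  qed
  then have x3p: "x3 $ p = 0" using x3(2) by simp
  obtain q where q: "x3 $ q \<noteq> 0" using x3(1) by (metis vec_eq_iff zero_index)
  obtain s0 where s0: "x2 $ s0 \<noteq> 0" using x2(1) by (metis vec_eq_iff zero_index)
  note g2 = gf2[OF assms(3)] and g3 = gf3[OF assms(4)]
  have x3blk: "\<forall>a\<in>char_vec ` B. (\<Sum>i\<in>UNIV. a$i * x3$i) = 0" using x3(2) by blast
  have "CARD('n) \<le> 3"
  proof (rule comb[where col = "\<lambda>i. x3 $ i" and S = "{i. x2 $ i \<noteq> 0}" and ka = 0 and kb = 1 and kc = "1+1"])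
    show "steiner_triple_system B" by fact
    show "\<And>z::'f3. z = 0 \<or> z = 1 \<or> z = 1 + 1" by (rule g3(1))
    show "x3 $ p \<noteq> x3 $ q" using x3p q by simp
    show "s0 \<in> {i. x2 $ i \<noteq> 0}" using s0 by simp
  next
    fix a c d assume b: "{a, c, d} \<in> B" "a \<noteq> c" "a \<noteq> d" "c \<noteq> d"
    show "(x3 $ a = x3 $ c \<longrightarrow> x3 $ d = x3 $ a) \<and> (x3 $ a \<noteq> x3 $ c \<longrightarrow> x3 $ d \<noteq> x3 $ a \<and> x3 $ d \<noteq> x3 $ c)"
      using f3prop[OF g3(2) block3[OF x3blk b]] .
  next
    fix a c d assume b: "{a, c, d} \<in> B" "a \<noteq> c" "a \<noteq> d" "c \<noteq> d"
    have e: "x2$a + x2$c + x2$d = 0" using block3[OF x2(2) b] .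
    show "(a \<in> {i. x2 $ i \<noteq> 0} \<and> c \<in> {i. x2 $ i \<noteq> 0} \<longrightarrow> d \<notin> {i. x2 $ i \<noteq> 0}) \<and>
          (a \<in> {i. x2 $ i \<noteq> 0} \<and> c \<notin> {i. x2 $ i \<noteq> 0} \<longrightarrow> d \<in> {i. x2 $ i \<noteq> 0}) \<and>
          (a \<notin> {i. x2 $ i \<noteq> 0} \<and> c \<notin> {i. x2 $ i \<noteq> 0} \<longrightarrow> d \<notin> {i. x2 $ i \<noteq> 0})"
      using f2prop[OF g2(2) g2(1) e] by simp
  qed
  then show False using assms(2) by simp
qed

end
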